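(* Assume the standing assumptions stated in the context. Let $\mathsf{u}=(\mathsf{u}_1,\mathsf{u}_2)$ be a bounded upper semicontinuous viscosity subsolution of the system $$\rho v_j(x)=H(x,y_j,Dv_j(x))+\lambda_j\big(v_{\bar\jmath}(x)-v_j(x)\big),\qquad j=1,2,\ \bar\jmath=3-j,$$ on $[\underline{x},+\infty)$. Let $\mathsf{v}=(\mathsf{v}_1,\mathsf{v}_2)$ be a bounded lower semicontinuous viscosity supersolution of the same system on $(\underline{x},+\infty)$. Extend $\mathsf{v}_j$ to $\underline{x}$ by $$\mathsf{v}_j(\underline{x})=\liminf_{z\to\underline{x},\,z>\underline{x}}\mathsf{v}_j(z).$$ Then $\mathsf{u}_j\le\mathsf{v}_j$ on $[\underline{x},+\infty)$ for $j=1,2$.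
   Context: Standing assumptions: $\rho>0$; $-\infty<r<\rho$; $0<y_1<y_2$; $\gamma>1$; $\underline{x}\le0$ with $\rho\underline{x}+y_j>0$ for $j=1,2$; $\lambda_1,\lambda_2\ge0$ are constants (Poisson switching intensities). The utility is $u(c)=\frac{c^{1-\gamma}}{1-\gamma}$ for $c>0$. The Hamiltonian is $$H(x,y_j,p)=\sup_{c\ge0}\{u(c)+(rx+y_j-c)p\}=\begin{cases}(rx+y_j)p+\frac{\gamma}{1-\gamma}p^{1-\frac1\gamma}, & p\ge0,\\ +\infty,& p<0.\end{cases}$$ All functions are defined on $[\underline{x},+\infty)$. Viscosity subsolution on a set $S\subseteq[\underline{x},\infty)$: an u.s.c. pair $v=(v_1,v_2)$ such that whenever $\varphi$ is smooth, $j\in\{1,2\}$, and $v_j-\varphi$ has a local maximum (relative to $[\underline{x},\infty)$) at $x_0\in S$, then $\rho v_j(x_0)\le H(x_0,y_j,D\varphi(x_0))+\lambda_j(v_{\bar\jmath}(x_0)-v_j(x_0))$. Viscosity supersolution on $S$: an l.s.c. pair such that whenever $v_j-\varphi$ has a local minimum at $x_0\in S$, then $\rho v_j(x_0)\ge H(x_0,y_j,D\varphi(x_0))+\lambda_j(v_{\bar\jmath}(x_0)-v_j(x_0))$. *)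

theory Defs
  imports "HOL-Analysis.Analysis" "HOL-Library.Extended_Real"
begin

definition Ham :: "real \<Rightarrow> real \<Rightarrow> real \<Rightarrow> real \<Rightarrow> real \<Rightarrow> ereal" where
  "Ham r \<gamma> x y p =
     (if p \<ge> 0 then ereal ((r * x + y) * p + \<gamma> / (1 - \<gamma>) * p powr (1 - 1 / \<gamma>))
      else \<infinity>)"

text \<open>Smooth (here: continuously differentiable on the reals) test functions.\<close>
definition test_fun :: "(real \<Rightarrow> real) \<Rightarrow> (real \<Rightarrow> real) \<Rightarrow> bool" where
  "test_fun \<phi> D\<phi> \<longleftrightarrow> (\<forall>x. (\<phi> has_real_derivative D\<phi> x) (at x)) \<and> continuous_on UNIV D\<phi>"

definition loc_max_rel :: "real \<Rightarrow> (real \<Rightarrow> real) \<Rightarrow> real \<Rightarrow> bool" where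
  "loc_max_rel xl f x0 \<longleftrightarrow> (\<exists>e>0. \<forall>x. xl \<le> x \<and> \<bar>x - x0\<bar> < e \<longrightarrow> f x \<le> f x0)"

definition loc_min_rel :: "real \<Rightarrow> (real \<Rightarrow> real) \<Rightarrow> real \<Rightarrow> bool" where
  "loc_min_rel xl f x0 \<longleftrightarrow> (\<exists>e>0. \<forall>x. xl \<le> x \<and> \<bar>x - x0\<bar> < e \<longrightarrow> f x0 \<le> f x)"

definition usc_on :: "real set \<Rightarrow> (real \<Rightarrow> real) \<Rightarrow> bool" where
  "usc_on S f \<longleftrightarrow> (\<forall>x\<in>S. \<forall>e>0. \<exists>d>0. \<forall>z\<in>S. \<bar>z - x\<bar> < d \<longrightarrow> f z < f x + e)"

definition lsc_on :: "real set \<Rightarrow> (real \<Rightarrow> real) \<Rightarrow> bool" where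
  "lsc_on S f \<longleftrightarrow> (\<forall>x\<in>S. \<forall>e>0. \<exists>d>0. \<forall>z\<in>S. \<bar>z - x\<bar> < d \<longrightarrow> f x - e < f z)"

text \<open>Pairs are indexed by j in {1,2}; the other index is 3 - j.
  Parameters: rho r gamma, incomes y j, intensities lam j, lower bound xl.\<close>
definition visc_sub :: "real \<Rightarrow> real \<Rightarrow> real \<Rightarrow> (nat \<Rightarrow> real) \<Rightarrow> (nat \<Rightarrow> real) \<Rightarrow> real
    \<Rightarrow> real set \<Rightarrow> (nat \<Rightarrow> real \<Rightarrow> real) \<Rightarrow> bool" where
  "visc_sub \<rho> r \<gamma> y lam xl S v \<longleftrightarrow>
     (\<forall>j\<in>{1,2}. usc_on {xl..} (v j)) \<and>
     (\<forall>\<phi> D\<phi> j x0. test_fun \<phi> D\<phi> \<and> j \<in> {1,2} \<and> x0 \<in> S \<and>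
        loc_max_rel xl (\<lambda>x. v j x - \<phi> x) x0 \<longrightarrow>
        ereal (\<rho> * v j x0) \<le> Ham r \<gamma> x0 (y j) (D\<phi> x0) + ereal (lam j * (v (3 - j) x0 - v j x0)))"

definition visc_super :: "real \<Rightarrow> real \<Rightarrow> real \<Rightarrow> (nat \<Rightarrow> real) \<Rightarrow> (nat \<Rightarrow> real) \<Rightarrow> real
    \<Rightarrow> real set \<Rightarrow> (nat \<Rightarrow> real \<Rightarrow> real) \<Rightarrow> bool" where
  "visc_super \<rho> r \<gamma> y lam xl S v \<longleftrightarrow>
     (\<forall>j\<in>{1,2}. lsc_on S (v j)) \<and>
     (\<forall>\<phi> D\<phi> j x0. test_fun \<phi> D\<phi> \<and> j \<in> {1,2} \<and> x0 \<in> S \<and>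
        loc_min_rel xl (\<lambda>x. v j x - \<phi> x) x0 \<longrightarrow>
        ereal (\<rho> * v j x0) \<ge> Ham r \<gamma> x0 (y j) (D\<phi> x0) + ereal (lam j * (v (3 - j) x0 - v j x0)))"

end

theory Submission
  imports Defs
begin

lemma usc_attains:
  fixes F :: "'a::metric_space \<Rightarrow> real"
  assumes K: "compact K" "K \<noteq> {}" "bdd_above (F ` K)"
    and usc: "\<forall>a\<in>K. \<forall>e>0. \<exists>d>0. \<forall>q\<in>K. dist q a < d \<longrightarrow> F q < F a + e"
  shows "\<exists>a\<in>K. \<forall>q\<in>K. F q \<le> F a"
proof -
  define S where "S = Sup (F ` K)"
  have "\<exists>q\<in>K. S - 1/Suc n < F q" for n :: nat
  proof -
    have "S - 1/Suc n < S" by simp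
    then show ?thesis unfolding S_def using less_cSup_iff[of "F ` K"] K by auto
  qed
  hence "\<forall>n. \<exists>q. q \<in> K \<and> S - 1/Suc n < F q" by blast
  from choice[OF this] obtain f where f: "\<And>n. f n \<in> K \<and> S - 1/Suc n < F (f n)" by blast
  from compact_imp_seq_compact[OF K(1)] f obtain l r where l: "l \<in> K" "strict_mono r" "(f \<circ> r) \<longlonglongrightarrow> l"
    unfolding seq_compact_def by metis
  have "S \<le> F l"
  proof (rule ccontr)
    assume "\<not> S \<le> F l"
    define e where "e = (S - F l)/2"
    have e: "e > 0" using \<open>\<not> S \<le> F l\<close> by (simp add: e_def)
    obtain d where d: "d > 0" "\<forall>q\<in>K. dist q l < d \<longrightarrow> F q < F l + e" using usc l(1) e by blast
    have "eventually (\<lambda>n. dist ((f\<circ>r) n) l < d) sequentially" using tendstoD[OF l(3) d(1)] .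
    then obtain N where N: "\<forall>n\<ge>N. dist (f (r n)) l < d" by (auto simp: eventually_sequentially)
    obtain N2 where N2: "inverse (real (Suc N2)) < e" using reals_Archimedean[OF e] by blast
    define n where "n = max N N2"
    have "N2 \<le> r n" using seq_suble[OF l(2), of n] n_def by linarith
    hence "1/ real (Suc (r n)) \<le> 1 / real (Suc N2)"
      by (intro divide_left_mono) auto
    hence h1: "1/ real (Suc (r n)) < e" using N2 by (simp add: inverse_eq_divide)
    have h2: "F (f (r n)) < F l + e" using d(2) N f n_def by auto
    have h3: "S - 1/Suc (r n) < F (f (r n))" using f by blast
    define k where "k = 1/ real (Suc (r n))"
    have "S - k < F (f (r n))" "k < e" using h1 h3 k_def by auto
    moreover have "2*e = S - F l" using e_def by simp
    ultimately show False using h2 by linarith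
  qed
  moreover have "\<forall>q\<in>K. F q \<le> S" unfolding S_def using K(3) by (simp add: cSup_upper)
  ultimately show ?thesis using l(1) by force
qed

lemma uc_lemma:
  fixes f g h :: "real \<Rightarrow> real"
  assumes fu: "usc_on {xl..} f" and gl: "lsc_on {xl..} g" and hc: "continuous_on UNIV h"
    and K: "compact K" "K \<subseteq> {xl..}" and lt: "\<forall>a\<in>K. f a - g a - h a < T"
  shows "\<exists>\<delta>>0. \<forall>x z. xl \<le> x \<longrightarrow> z \<in> K \<longrightarrow> \<bar>x - z\<bar> < \<delta> \<longrightarrow> f x - g z - h z < T"
proof -
  have "\<forall>a\<in>K. \<exists>d>0. \<forall>x z. xl \<le> x \<longrightarrow> xl \<le> z \<longrightarrow> \<bar>x - a\<bar> < d \<longrightarrow> \<bar>z - a\<bar> < d \<longrightarrow> f x - g z - h z < T"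
  proof
    fix a assume a: "a \<in> K"
    hence axl: "a \<in> {xl..}" using K by auto
    define \<eta> where "\<eta> = (T - (f a - g a - h a))/3"
    have \<eta>: "\<eta> > 0" using lt a by (simp add: \<eta>_def)
    obtain d1 where d1: "d1 > 0" "\<forall>z\<in>{xl..}. \<bar>z - a\<bar> < d1 \<longrightarrow> f z < f a + \<eta>"
      using fu axl \<eta> unfolding usc_on_def by blast
    obtain d2 where d2: "d2 > 0" "\<forall>z\<in>{xl..}. \<bar>z - a\<bar> < d2 \<longrightarrow> g a - \<eta> < g z"
      using gl axl \<eta> unfolding lsc_on_def by blast
    have "continuous (at a) h" using hc by (simp add: continuous_on_eq_continuous_at)
    then obtain d3 where d3: "d3 > 0" "\<forall>z. dist z a < d3 \<longrightarrow> dist (h z) (h a) < \<eta>"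
      using \<eta> unfolding continuous_at_eps_delta by blast
    show "\<exists>d>0. \<forall>x z. xl \<le> x \<longrightarrow> xl \<le> z \<longrightarrow> \<bar>x - a\<bar> < d \<longrightarrow> \<bar>z - a\<bar> < d \<longrightarrow> f x - g z - h z < T"
    proof (intro exI[of _ "min d1 (min d2 d3)"] conjI allI impI)
      show "min d1 (min d2 d3) > 0" using d1 d2 d3 by simp
      fix x z assume h: "xl \<le> x" "xl \<le> z" "\<bar>x - a\<bar> < min d1 (min d2 d3)" "\<bar>z - a\<bar> < min d1 (min d2 d3)"
      have "f x < f a + \<eta>" using d1 h by auto
      moreover have "g a - \<eta> < g z" using d2 h by auto
      moreover have "\<bar>h z - h a\<bar> < \<eta>" using d3 h by (auto simp: dist_real_def)
      moreover have "3*\<eta> = T - (f a - g a - h a)" unfolding \<eta>_def by simp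
      ultimately show "f x - g z - h z < T" unfolding abs_less_iff by linarith
    qed
  qed
  from bchoice[OF this] obtain d where d: "\<forall>a\<in>K. d a > 0 \<and> (\<forall>x z. xl \<le> x \<longrightarrow> xl \<le> z \<longrightarrow> \<bar>x - a\<bar> < d a \<longrightarrow> \<bar>z - a\<bar> < d a \<longrightarrow> f x - g z - h z < T)"
    by blast
  have cov: "K \<subseteq> \<Union>((\<lambda>a. ball a (d a)) ` K)" using d by force
  obtain \<epsilon> where \<epsilon>: "0 < \<epsilon>" "\<And>x. x \<in> K \<Longrightarrow> \<exists>G \<in> (\<lambda>a. ball a (d a)) ` K. ball x \<epsilon> \<subseteq> G"
    using Heine_Borel_lemma[OF K(1) cov] by blast
  show ?thesis
  proof (intro exI[of _ \<epsilon>] conjI allI impI)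
    show "\<epsilon> > 0" by fact
    fix x z assume h: "xl \<le> x" "z \<in> K" "\<bar>x - z\<bar> < \<epsilon>"
    obtain a where a: "a \<in> K" "ball z \<epsilon> \<subseteq> ball a (d a)" using \<epsilon>(2)[OF h(2)] by blast
    have "z \<in> ball z \<epsilon>" using \<epsilon>(1) by simp
    hence "z \<in> ball a (d a)" using a by blast
    moreover have "x \<in> ball z \<epsilon>" using h(3) by (simp add: dist_real_def abs_minus_commute)
    hence "x \<in> ball a (d a)" using a by blast
    ultimately have "\<bar>x - a\<bar> < d a" "\<bar>z - a\<bar> < d a" by (auto simp: dist_real_def abs_minus_commute)
    moreover have "xl \<le> z" using h K by auto
    ultimately show "f x - g z - h z < T" using d a h by blast
  qed
qed

lemma lsc_ext:
  assumes l: "lsc_on {xl<..} g" and e: "ereal (g xl) = Liminf (at_right xl) (\<lambda>z. ereal (g z))"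
  shows "lsc_on {xl..} g"
  unfolding lsc_on_def
proof (intro ballI allI impI)
  fix a e' :: real assume a: "a \<in> {xl..}" and e': "e' > 0"
  show "\<exists>d>0. \<forall>z\<in>{xl..}. \<bar>z - a\<bar> < d \<longrightarrow> g a - e' < g z"
  proof (cases "a = xl")
    case True
    have "ereal (g xl - e') < ereal (g xl)" using e' by simp
    hence "ereal (g xl - e') < Liminf (at_right xl) (\<lambda>z. ereal (g z))" using e by simp
    hence "eventually (\<lambda>z. ereal (g xl - e') < ereal (g z)) (at_right xl)" by (rule less_LiminfD)
    then obtain b where b: "b > xl" "\<forall>z>xl. z < b \<longrightarrow> g xl - e' < g z"
      unfolding eventually_at_right_field by auto
    show ?thesis
    proof (intro exI[of _ "b - xl"] conjI ballI impI)
      show "b - xl > 0" using b by simp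
      fix z assume "z \<in> {xl..}" "\<bar>z - a\<bar> < b - xl"
      then show "g a - e' < g z" using b True e' by (cases "z = xl") auto
    qed
  next
    case False
    hence ax: "a > xl" using a by auto
    obtain d where d: "d > 0" "\<forall>z\<in>{xl<..}. \<bar>z - a\<bar> < d \<longrightarrow> g a - e' < g z"
      using l ax e' unfolding lsc_on_def greaterThan_iff by blast
    show ?thesis
    proof (intro exI[of _ "min d (a - xl)"] conjI ballI impI)
      show "min d (a - xl) > 0" using d ax by simp
      fix z assume "z \<in> {xl..}" "\<bar>z - a\<bar> < min d (a - xl)"
      then show "g a - e' < g z" using d by auto
    qed
  qed
qed

lemma liminf_approx:
  fixes xl d e' :: real
  assumes e: "ereal (g xl) = Liminf (at_right xl) (\<lambda>z. ereal (g z))" and d: "d > 0" and e': "e' > 0"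
  shows "\<exists>c. xl < c \<and> c < xl + d \<and> g c < g xl + e'"
proof (rule ccontr)
  assume "\<not> ?thesis"
  hence "\<forall>c. xl < c \<and> c < xl + d \<longrightarrow> g xl + e' \<le> g c" by force
  hence "eventually (\<lambda>z. ereal (g xl + e') \<le> ereal (g z)) (at_right xl)"
  proof -
    have "\<exists>b>xl. \<forall>z>xl. z < b \<longrightarrow> ereal (g xl + e') \<le> ereal (g z)"
      using d \<open>\<forall>c. _\<close> by (intro exI[of _ "xl + d"]) auto
    then show ?thesis using eventually_at_right_field by blast
  qed
  hence "ereal (g xl + e') \<le> Liminf (at_right xl) (\<lambda>z. ereal (g z))" by (rule Liminf_bounded)
  hence "ereal (g xl + e') \<le> ereal (g xl)" using e by simp
  hence "g xl + e' \<le> g xl" by simp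
  then show False using e' by simp
qed


lemma bC_bound:
  fixes r xl yj \<beta> z :: real
  assumes "xl \<le> z" "\<beta> \<ge> 0"
  shows "(r*z + yj) * (\<beta>*(2*(z - xl))/(1+(z-xl)^2)) \<le> \<beta>*(2*\<bar>r\<bar> + \<bar>r*xl\<bar> + \<bar>yj\<bar>)"
proof -
  define t where "t = z - xl"
  have t: "t \<ge> 0" using assms t_def by simp
  define q where "q = 2*t/(1+t^2)"
  have den: "1 + t^2 > 0" by (simp add: add_pos_nonneg)
  have q0: "q \<ge> 0" using t den q_def by simp
  have "2*t \<le> 1 + t^2" using sum_power2_ge_zero[of "t - 1" 0] by (simp add: power2_eq_square algebra_simps)
  hence q1: "q \<le> 1" using den q_def by (simp add: divide_le_eq)
  have "t * q = 2 * (t^2/(1+t^2))" using q_def by (simp add: power2_eq_square)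
  moreover have "t^2/(1+t^2) \<le> 1" using den by (simp add: divide_le_eq)
  ultimately have tq: "t * q \<le> 2" by linarith
  have zeq: "r*z + yj = r*t + (r*xl + yj)" unfolding t_def by (simp add: algebra_simps)
  have "(r*z + yj) * q \<le> \<bar>r*z + yj\<bar> * q" using q0 by (simp add: mult_right_mono)
  also have "\<dots> \<le> (\<bar>r\<bar>*t + \<bar>r*xl\<bar> + \<bar>yj\<bar>) * q"
  proof (rule mult_right_mono[OF _ q0])
    have "\<bar>r*t + (r*xl + yj)\<bar> \<le> \<bar>r*t\<bar> + \<bar>r*xl\<bar> + \<bar>yj\<bar>" using abs_triangle_ineq[of "r*t" "r*xl + yj"] abs_triangle_ineq[of "r*xl" yj] by linarith
    moreover have "\<bar>r*t\<bar> = \<bar>r\<bar>*t" using t by (simp add: abs_mult)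
    ultimately show "\<bar>r*z + yj\<bar> \<le> \<bar>r\<bar>*t + \<bar>r*xl\<bar> + \<bar>yj\<bar>" unfolding zeq by linarith
  qed
  also have "\<dots> = \<bar>r\<bar>*(t*q) + (\<bar>r*xl\<bar> + \<bar>yj\<bar>)*q" by (simp add: algebra_simps)
  also have "\<dots> \<le> \<bar>r\<bar>*2 + (\<bar>r*xl\<bar> + \<bar>yj\<bar>)*1"
    by (intro add_mono mult_left_mono mult_left_mono tq q1) auto
  finally have "(r*z + yj) * q \<le> 2*\<bar>r\<bar> + \<bar>r*xl\<bar> + \<bar>yj\<bar>" by simp
  hence "\<beta> * ((r*z + yj) * q) \<le> \<beta> * (2*\<bar>r\<bar> + \<bar>r*xl\<bar> + \<bar>yj\<bar>)" using assms(2) by (rule mult_left_mono)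
  moreover have "(r*z + yj) * (\<beta>*(2*(z - xl))/(1+(z-xl)^2)) = \<beta> * ((r*z + yj) * q)"
    using q_def t_def by simp
  ultimately show ?thesis by simp
qed

lemma rp_bound:
  fixes a s \<epsilon> \<theta> :: real
  assumes "\<bar>a\<bar> \<le> \<epsilon>*\<theta>" "0 \<le> s" "s \<le> \<epsilon>" "0 < \<epsilon>" "0 \<le> \<theta>" "\<theta> \<le> 1"
  shows "\<bar>(a - s) * (2*a/\<epsilon>^2)\<bar> \<le> 4*\<theta>"
proof -
  have "\<epsilon>*\<theta> \<le> \<epsilon>" using assms by (simp add: mult_left_le)
  hence h1: "\<bar>a - s\<bar> \<le> 2*\<epsilon>" using assms by linarith
  have h2: "\<bar>2*a/\<epsilon>^2\<bar> \<le> 2*\<theta>/\<epsilon>"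
  proof -
    have "\<bar>2*a/\<epsilon>^2\<bar> = 2*\<bar>a\<bar>/\<epsilon>^2" by (simp add: abs_mult)
    also have "\<dots> \<le> 2*(\<epsilon>*\<theta>)/\<epsilon>^2" using assms by (intro divide_right_mono) auto
    also have "\<dots> = 2*\<theta>/\<epsilon>" using assms by (simp add: power2_eq_square)
    finally show ?thesis .
  qed
  have "\<bar>(a - s) * (2*a/\<epsilon>^2)\<bar> = \<bar>a - s\<bar> * \<bar>2*a/\<epsilon>^2\<bar>" by (simp add: abs_mult)
  also have "\<dots> \<le> (2*\<epsilon>) * (2*\<theta>/\<epsilon>)" using h1 h2 by (intro mult_mono) auto
  also have "\<dots> = 4*\<theta>" using assms by simp
  finally show ?thesis .
qed

lemma usc_combo:
  fixes f g :: "real \<Rightarrow> real" and h :: "real \<times> real \<Rightarrow> real"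
  assumes fu: "usc_on {xl..} f" and gl: "lsc_on {xl..} g" and hc: "continuous_on UNIV h"
    and K: "K \<subseteq> {xl..} \<times> {xl..}"
  shows "\<forall>a\<in>K. \<forall>e>0. \<exists>d>0. \<forall>q\<in>K. dist q a < d \<longrightarrow> f (fst q) - g (snd q) - h q < f (fst a) - g (snd a) - h a + e"
proof (intro ballI allI impI)
  fix a :: "real \<times> real" and e :: real assume a: "a \<in> K" and e: "e > 0"
  have a1: "fst a \<in> {xl..}" and a2: "snd a \<in> {xl..}" using a K by auto
  define \<eta> where "\<eta> = e/3"
  have \<eta>: "\<eta> > 0" using e by (simp add: \<eta>_def)
  obtain d1 where d1: "d1 > 0" "\<forall>z\<in>{xl..}. \<bar>z - fst a\<bar> < d1 \<longrightarrow> f z < f (fst a) + \<eta>"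
    using fu a1 \<eta> unfolding usc_on_def by blast
  obtain d2 where d2: "d2 > 0" "\<forall>z\<in>{xl..}. \<bar>z - snd a\<bar> < d2 \<longrightarrow> g (snd a) - \<eta> < g z"
    using gl a2 \<eta> unfolding lsc_on_def by blast
  have "continuous (at a) h" using hc by (metis continuous_on_eq_continuous_at open_UNIV UNIV_I)
  then obtain d3 where d3: "d3 > 0" "\<forall>z. dist z a < d3 \<longrightarrow> dist (h z) (h a) < \<eta>"
    using \<eta> unfolding continuous_at_eps_delta by blast
  show "\<exists>d>0. \<forall>q\<in>K. dist q a < d \<longrightarrow> f (fst q) - g (snd q) - h q < f (fst a) - g (snd a) - h a + e"
  proof (intro exI[of _ "min d1 (min d2 d3)"] conjI ballI impI)
    show "min d1 (min d2 d3) > 0" using d1 d2 d3 by simp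
    fix q assume q: "q \<in> K" "dist q a < min d1 (min d2 d3)"
    have q1: "fst q \<in> {xl..}" and q2: "snd q \<in> {xl..}" using q K by auto
    have "\<bar>fst q - fst a\<bar> < d1" using dist_fst_le[of q a] q by (simp add: dist_real_def)
    hence "f (fst q) < f (fst a) + \<eta>" using d1 q1 by auto
    moreover have "\<bar>snd q - snd a\<bar> < d2" using dist_snd_le[of q a] q by (simp add: dist_real_def)
    hence "g (snd a) - \<eta> < g (snd q)" using d2 q2 by auto
    moreover have "dist q a < d3" using q(2) by simp
    hence "dist (h q) (h a) < \<eta>" using d3(2) by blast
    hence "\<bar>h q - h a\<bar> < \<eta>" by (simp add: dist_real_def)
    moreover have "3*\<eta> = e" unfolding \<eta>_def by simp
    ultimately show "f (fst q) - g (snd q) - h q < f (fst a) - g (snd a) - h a + e"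
      unfolding abs_less_iff by linarith
  qed
qed


lemma der1: "((\<lambda>t. (t + s - z)^2/\<epsilon>^2) has_real_derivative (2*(t + s - z)/\<epsilon>^2)) (at t)" for s z \<epsilon> t :: real
proof -
  have "((\<lambda>t. (t + s - z)^2) has_real_derivative 2*(t + s - z)) (at t)"
    by (auto intro!: derivative_eq_intros)
  then show ?thesis by (rule DERIV_cdivide)
qed
lemma der2:
  fixes x s \<epsilon> \<beta> xl t :: real
  shows "((\<lambda>t. - ((x + s - t)^2/\<epsilon>^2) - \<beta> * ln (1 + (t - xl)^2)) has_real_derivative
     (2*(x + s - t)/\<epsilon>^2 - \<beta>*(2*(t - xl))/(1+(t-xl)^2))) (at t)"
proof -
  have pos: "0 < 1 + (t - xl)^2" by (simp add: add_pos_nonneg)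
  have h1: "((\<lambda>t. (x + s - t)^2) has_real_derivative (- (2*(x + s - t)))) (at t)"
    by (auto intro!: derivative_eq_intros)
  have h1': "((\<lambda>t. (x + s - t)^2/\<epsilon>^2) has_real_derivative (- (2*(x + s - t)))/\<epsilon>^2) (at t)"
    using h1 by (rule DERIV_cdivide)
  have h2: "((\<lambda>t. ln (1 + (t - xl)^2)) has_real_derivative (2*(t - xl))/(1+(t-xl)^2)) (at t)"
    using pos by (auto intro!: derivative_eq_intros)
  have h2': "((\<lambda>t. \<beta> * ln (1 + (t - xl)^2)) has_real_derivative \<beta> * ((2*(t - xl))/(1+(t-xl)^2))) (at t)"
    using h2 by (rule DERIV_cmult)
  have "((\<lambda>t. - ((x + s - t)^2/\<epsilon>^2) - \<beta> * ln (1 + (t - xl)^2)) has_real_derivative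
     (- ((- (2*(x + s - t)))/\<epsilon>^2) - \<beta> * ((2*(t - xl))/(1+(t-xl)^2)))) (at t)"
    using DERIV_minus[OF h1'] h2' by (rule DERIV_diff)
  moreover have "(- ((- (2*(x + s - t)))/\<epsilon>^2) - \<beta> * ((2*(t - xl))/(1+(t-xl)^2)))
     = (2*(x + s - t)/\<epsilon>^2 - \<beta>*(2*(t - xl))/(1+(t-xl)^2))"
    by (simp only: minus_divide_left minus_minus times_divide_eq_right)
  ultimately show ?thesis by simp
qed

lemma engine:
  fixes \<rho> r \<gamma> xl \<beta> B S \<theta> \<tau> \<epsilon> s R \<delta>1 :: real and y lam :: "nat \<Rightarrow> real"
    and u v :: "nat \<Rightarrow> real \<Rightarrow> real" and L :: "real \<Rightarrow> real"
  assumes rho: "\<rho> > 0" and gam: "\<gamma> > 1" and lam: "lam 1 \<ge> 0" "lam 2 \<ge> 0"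
    and subt: "visc_sub \<rho> r \<gamma> y lam xl {xl..} u"
    and supt: "visc_super \<rho> r \<gamma> y lam xl {xl<..} v"
    and usc: "\<forall>j\<in>{1,2}. usc_on {xl..} (u j)" and lsc: "\<forall>j\<in>{1,2}. lsc_on {xl..} (v j)"
    and bnd: "\<forall>j\<in>{1,2}. \<forall>x\<ge>xl. \<forall>z\<ge>xl. u j x - v j z \<le> B"
    and beta: "\<beta> > 0" and L_def: "L = (\<lambda>z. \<beta> * ln (1 + (z - xl)^2))"
    and SB: "S \<le> B"
    and th: "0 < \<theta>" "\<theta> \<le> 1/2" and ta: "0 < \<tau>" "\<tau> \<le> \<theta>^2/2" "\<tau> \<le> 1"
    and key: "4*\<bar>r\<bar>*\<theta> + \<beta>*(2*\<bar>r\<bar> + \<bar>r*xl\<bar> + \<bar>y 1\<bar> + \<bar>y 2\<bar>) < \<rho>*(S - \<tau>)"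
    and ep: "0 < \<epsilon>" "\<epsilon> \<le> 1" and ss: "0 \<le> s" "s \<le> \<epsilon>"
    and Rz: "\<forall>z\<ge>xl. L z \<le> B - S + 1 \<longrightarrow> z + (B - S + 2) \<le> R"
    and d1: "\<forall>j\<in>{1,2}. \<forall>x z. xl \<le> x \<longrightarrow> xl \<le> z \<longrightarrow> z \<le> R \<longrightarrow> \<bar>x - z\<bar> < \<delta>1 \<longrightarrow> u j x - v j z - L z < S + \<theta>^2/2"
    and ed: "(B - S + 3) * \<epsilon> < \<delta>1"
    and intr: "\<forall>j\<in>{1,2}. \<forall>x z. xl \<le> x \<longrightarrow> xl \<le> z \<longrightarrow> \<bar>x + s - z\<bar> \<le> \<epsilon>*\<theta> \<longrightarrow> \<bar>x - z\<bar> < \<delta>1 \<longrightarrow> S - \<tau> \<le> u j x - v j z - L z \<longrightarrow> xl < z"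
    and low: "\<exists>j\<in>{1,2}. \<exists>x\<ge>xl. \<exists>z\<ge>xl. S - \<tau> \<le> u j x - v j z - (x + s - z)^2/\<epsilon>^2 - L z"
  shows False
proof -
  define G where "G = (\<lambda>j x z. u j x - v j z - (x + s - z)^2/\<epsilon>^2 - L z)"
  have Lnn: "0 \<le> L z" for z unfolding L_def using beta by simp
  have nz: "1 + (t - xl)^2 \<noteq> 0" for t :: real
  proof -
    have "0 < 1 + (t - xl)^2" by (simp add: add_pos_nonneg)
    then show ?thesis by simp
  qed
  have Lcont: "continuous_on UNIV L" unfolding L_def
    by (intro continuous_intros) (use nz in auto)
  define P where "P = B - S + 1"
  have P1: "P \<ge> 1" using SB P_def by simp
  have pen0: "0 \<le> (x + s - z)^2/\<epsilon>^2" for x z by simp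
  have bound: "x \<le> R \<and> z \<le> R \<and> \<bar>x - z\<bar> \<le> (P+1)*\<epsilon>"
    if j: "j\<in>{1,2}" and x: "xl \<le> x" and z: "xl \<le> z" and g: "S - 1 \<le> G j x z" for j x z
  proof -
    have "u j x - v j z \<le> B" using bnd j x z by blast
    hence pl: "(x + s - z)^2/\<epsilon>^2 + L z \<le> P" using g unfolding G_def P_def by linarith
    hence "L z \<le> B - S + 1" using pen0[of x z] P_def by linarith
    hence zR: "z + (P + 1) \<le> R" using Rz z P_def by auto
    have "(x + s - z)^2/\<epsilon>^2 \<le> P" using pl Lnn[of z] by linarith
    hence "(x + s - z)^2 \<le> P * \<epsilon>^2" using ep by (simp add: divide_le_eq)
    also have "\<dots> \<le> (P * \<epsilon>)^2"
    proof -
      have "1 * P \<le> P * P" using P1 by (intro mult_right_mono) auto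
      hence "P * \<epsilon>^2 \<le> (P * P) * \<epsilon>^2" by (intro mult_right_mono) auto
      then show ?thesis by (simp add: power2_eq_square algebra_simps)
    qed
    finally have "\<bar>x + s - z\<bar> \<le> \<bar>P * \<epsilon>\<bar>" using abs_le_square_iff by blast
    hence a: "\<bar>x + s - z\<bar> \<le> P * \<epsilon>" using P1 ep by simp
    have "P * \<epsilon> \<le> P" using P1 ep by (simp add: mult_left_le)
    hence "x \<le> R" using a zR ss by linarith
    moreover have "\<bar>x - z\<bar> \<le> (P+1)*\<epsilon>" using a ss by (simp add: algebra_simps)
    ultimately show ?thesis using zR P1 by (intro conjI; linarith)
  qed
  obtain j0 x0 z0 where j0: "j0 \<in> {1,2}" "xl \<le> x0" "xl \<le> z0" "S - \<tau> \<le> G j0 x0 z0"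
    using low unfolding G_def by blast
  have g0: "S - 1 \<le> G j0 x0 z0" using j0 ta by linarith
  define K where "K = {xl..R} \<times> {xl..R}"
  have x0K: "(x0, z0) \<in> K" using bound[OF j0(1-3) g0] j0 unfolding K_def by auto
  have Kc: "compact K" unfolding K_def by (intro compact_Times compact_Icc)
  have KS: "K \<subseteq> {xl..} \<times> {xl..}" unfolding K_def by auto
  define h where "h = (\<lambda>q::real\<times>real. (fst q + s - snd q)^2/\<epsilon>^2 + L (snd q))"
  have hc: "continuous_on UNIV h" unfolding h_def
    by (intro continuous_intros continuous_on_compose2[OF Lcont]) (use ep in auto)
  have Gh: "G j (fst q) (snd q) = u j (fst q) - v j (snd q) - h q" for j q
    unfolding G_def h_def by simp
  have att: "\<exists>a\<in>K. \<forall>q\<in>K. G j (fst q) (snd q) \<le> G j (fst a) (snd a)" if j: "j \<in> {1,2}" for j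
  proof -
    have "\<exists>a\<in>K. \<forall>q\<in>K. (\<lambda>q. u j (fst q) - v j (snd q) - h q) q \<le> (\<lambda>q. u j (fst q) - v j (snd q) - h q) a"
    proof (rule usc_attains[OF Kc])
      show "K \<noteq> {}" using x0K by auto
      have "u j (fst q) - v j (snd q) - h q \<le> B" if "q \<in> K" for q
      proof -
        have "u j (fst q) - v j (snd q) \<le> B" using bnd j that KS by auto
        moreover have "h q \<ge> 0" unfolding h_def using Lnn by (simp add: add_nonneg_nonneg)
        ultimately show ?thesis by linarith
      qed
      then show "bdd_above ((\<lambda>q. u j (fst q) - v j (snd q) - h q) ` K)" by (intro bdd_aboveI2) auto
      show "\<forall>a\<in>K. \<forall>e>0. \<exists>d>0. \<forall>q\<in>K. dist q a < d \<longrightarrow>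
          u j (fst q) - v j (snd q) - h q < u j (fst a) - v j (snd a) - h a + e"
        using usc_combo[of xl "u j" "v j" h K] usc lsc j hc KS by blast
    qed
    then show ?thesis unfolding Gh by simp
  qed
  obtain a1 where a1: "a1 \<in> K" "\<forall>q\<in>K. G 1 (fst q) (snd q) \<le> G 1 (fst a1) (snd a1)" using att[of 1] by auto
  obtain a2 where a2: "a2 \<in> K" "\<forall>q\<in>K. G 2 (fst q) (snd q) \<le> G 2 (fst a2) (snd a2)" using att[of 2] by auto
  have "\<exists>j x z. j \<in> {1,2} \<and> xl \<le> x \<and> xl \<le> z \<and> (\<forall>j'\<in>{1,2}. \<forall>x' z'. xl \<le> x' \<longrightarrow> xl \<le> z' \<longrightarrow> G j' x' z' \<le> G j x z)"
  proof -
    define M where "M = max (G 1 (fst a1) (snd a1)) (G 2 (fst a2) (snd a2))"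
    have inK: "G j' x' z' \<le> M" if "j' \<in> {1,2}" "(x', z') \<in> K" for j' x' z'
      using that a1 a2 unfolding M_def by (auto intro: le_max_iff_disj[THEN iffD2])
    have all: "G j' x' z' \<le> M" if "j' \<in> {1,2}" "xl \<le> x'" "xl \<le> z'" for j' x' z'
    proof (cases "S - 1 \<le> G j' x' z'")
      case True
      then have "(x', z') \<in> K" using bound[OF that True] that unfolding K_def by auto
      then show ?thesis using inK that by blast
    next
      case False
      have "G j0 x0 z0 \<le> M" using inK j0(1) x0K by blast
      then show ?thesis using False j0(4) ta by linarith
    qed
    show ?thesis
    proof (cases "G 2 (fst a2) (snd a2) \<le> G 1 (fst a1) (snd a1)")
      case True
      hence "M = G 1 (fst a1) (snd a1)" unfolding M_def by simp
      then show ?thesis using all a1 unfolding K_def by (intro exI[of _ 1] exI[of _ "fst a1"] exI[of _ "snd a1"]) auto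
    next
      case False
      hence "M = G 2 (fst a2) (snd a2)" unfolding M_def by simp
      then show ?thesis using all a2 unfolding K_def by (intro exI[of _ 2] exI[of _ "fst a2"] exI[of _ "snd a2"]) auto
    qed
  qed
  then obtain j x z where j: "j \<in> {1,2}" and x: "xl \<le> x" and z: "xl \<le> z"
    and mx: "\<forall>j'\<in>{1,2}. \<forall>x' z'. xl \<le> x' \<longrightarrow> xl \<le> z' \<longrightarrow> G j' x' z' \<le> G j x z" by blast
  have "G j0 x0 z0 \<le> G j x z" using mx j0(1-3) by blast
  hence Gj: "S - \<tau> \<le> G j x z" using j0(4) by linarith
  have gj1: "S - 1 \<le> G j x z" using Gj ta by linarith
  have bz: "x \<le> R" "z \<le> R" "\<bar>x - z\<bar> \<le> (P+1)*\<epsilon>" using bound[OF j x z gj1] by auto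
  have "(P+1)*\<epsilon> < (B - S + 3) * \<epsilon>" using ep P_def by (simp add: mult_strict_right_mono)
  hence xz: "\<bar>x - z\<bar> < \<delta>1" using bz ed by linarith
  have uvL: "u j x - v j z - L z < S + \<theta>^2/2" using d1 j x z bz xz by blast
  have "(x + s - z)^2/\<epsilon>^2 < \<theta>^2/2 + \<tau>" using uvL Gj unfolding G_def by linarith
  hence "(x + s - z)^2/\<epsilon>^2 \<le> \<theta>^2" using ta by linarith
  hence "(x + s - z)^2 \<le> (\<epsilon>*\<theta>)^2" using ep by (simp add: divide_le_eq power_mult_distrib mult.commute)
  hence "\<bar>x + s - z\<bar> \<le> \<bar>\<epsilon>*\<theta>\<bar>" using abs_le_square_iff by blast
  hence aq: "\<bar>x + s - z\<bar> \<le> \<epsilon>*\<theta>" using ep th by simp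
  have GuvL: "S - \<tau> \<le> u j x - v j z - L z" using Gj pen0[of x z] unfolding G_def by linarith
  have zl: "xl < z" using intr j x z aq xz GuvL by blast
  define p where "p = 2*(x + s - z)/\<epsilon>^2"
  define Lp where "Lp = \<beta>*(2*(z - xl))/(1+(z-xl)^2)"
  have Lp0: "Lp \<ge> 0" unfolding Lp_def using beta z by (simp add: add_pos_nonneg)
  define \<phi>2 where "\<phi>2 = (\<lambda>t. - ((x + s - t)^2/\<epsilon>^2) - L t)"
  define D2 where "D2 = (\<lambda>t. 2*(x + s - t)/\<epsilon>^2 - \<beta>*(2*(t - xl))/(1+(t-xl)^2))"
  have tf2: "test_fun \<phi>2 D2" unfolding test_fun_def
  proof
    show "\<forall>t. (\<phi>2 has_real_derivative D2 t) (at t)"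
    proof
      fix t
      show "(\<phi>2 has_real_derivative D2 t) (at t)" unfolding \<phi>2_def D2_def L_def
        by (rule der2)
    qed
    show "continuous_on UNIV D2" unfolding D2_def
      by (intro continuous_intros) (use nz ep in auto)
  qed
  have lm2: "loc_min_rel xl (\<lambda>t. v j t - \<phi>2 t) z" unfolding loc_min_rel_def
  proof (intro exI[of _ 1] conjI allI impI)
    fix t assume "xl \<le> t \<and> \<bar>t - z\<bar> < 1"
    hence "G j x t \<le> G j x z" using mx j x by blast
    then show "v j z - \<phi>2 z \<le> v j t - \<phi>2 t" unfolding G_def \<phi>2_def by linarith
  qed simp
  have sup_ineq: "Ham r \<gamma> z (y j) (D2 z) + ereal (lam j * (v (3 - j) z - v j z)) \<le> ereal (\<rho> * v j z)"
    using supt tf2 j zl lm2 unfolding visc_super_def by auto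
  have D2z: "D2 z = p - Lp" unfolding D2_def p_def Lp_def by simp
  have pLp: "p - Lp \<ge> 0"
  proof (rule ccontr)
    assume "\<not> p - Lp \<ge> 0"
    hence "Ham r \<gamma> z (y j) (D2 z) = \<infinity>" unfolding D2z Ham_def by simp
    then show False using sup_ineq by simp
  qed
  define \<alpha> where "\<alpha> = 1 - 1/\<gamma>"
  define c where "c = \<gamma>/(1-\<gamma>)"
  have I2: "(r*z + y j)*(p - Lp) + c*((p - Lp) powr \<alpha>) + lam j * (v (3 - j) z - v j z) \<le> \<rho> * v j z"
    using sup_ineq pLp unfolding D2z Ham_def c_def \<alpha>_def by simp
  define \<phi>1 where "\<phi>1 = (\<lambda>t. (t + s - z)^2/\<epsilon>^2)"
  define D1 where "D1 = (\<lambda>t. 2*(t + s - z)/\<epsilon>^2)"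
  have tf1: "test_fun \<phi>1 D1" unfolding test_fun_def
  proof
    show "\<forall>t. (\<phi>1 has_real_derivative D1 t) (at t)"
    proof
      fix t
      show "(\<phi>1 has_real_derivative D1 t) (at t)" unfolding \<phi>1_def D1_def
        by (rule der1)
    qed
    show "continuous_on UNIV D1" unfolding D1_def by (intro continuous_intros) (use ep in auto)
  qed
  have lm1: "loc_max_rel xl (\<lambda>t. u j t - \<phi>1 t) x" unfolding loc_max_rel_def
  proof (intro exI[of _ 1] conjI allI impI)
    fix t assume "xl \<le> t \<and> \<bar>t - x\<bar> < 1"
    hence "G j t z \<le> G j x z" using mx j z by blast
    then show "u j t - \<phi>1 t \<le> u j x - \<phi>1 x" unfolding G_def \<phi>1_def by linarith
  qed simp
  have sub_ineq: "ereal (\<rho> * u j x) \<le> Ham r \<gamma> x (y j) (D1 x) + ereal (lam j * (u (3 - j) x - u j x))"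
    using subt tf1 j x lm1 unfolding visc_sub_def by auto
  have D1x: "D1 x = p" unfolding D1_def p_def by simp
  have p0: "p \<ge> 0" using pLp Lp0 by linarith
  have I1: "\<rho> * u j x \<le> (r*x + y j)*p + c*(p powr \<alpha>) + lam j * (u (3 - j) x - u j x)"
    using sub_ineq p0 unfolding D1x Ham_def c_def \<alpha>_def by simp
  have \<alpha>0: "\<alpha> \<ge> 0" unfolding \<alpha>_def using gam by simp
  have c0: "c < 0" unfolding c_def using gam by (simp add: divide_pos_neg)
  have "(p - Lp) powr \<alpha> \<le> p powr \<alpha>" using powr_mono2[OF \<alpha>0 pLp] Lp0 by simp
  hence pw: "c*(p powr \<alpha>) \<le> c*((p - Lp) powr \<alpha>)" using c0 by (simp add: mult_left_mono_neg)
  have j3: "3 - j \<in> {1,2}" using j by auto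
  have "G (3 - j) x z \<le> G j x z" using mx j3 x z by blast
  hence cpl: "u (3 - j) x - v (3 - j) z \<le> u j x - v j z" unfolding G_def by simp
  have lj: "lam j \<ge> 0" using j lam by auto
  have cp: "lam j * (u (3 - j) x - u j x) - lam j * (v (3 - j) z - v j z) \<le> 0"
  proof -
    have "lam j * (u (3 - j) x - u j x) - lam j * (v (3 - j) z - v j z)
        = lam j * ((u (3 - j) x - v (3 - j) z) - (u j x - v j z))" by (simp add: algebra_simps)
    also have "\<dots> \<le> 0" using lj cpl by (simp add: mult_nonneg_nonpos)
    finally show ?thesis .
  qed
  have alg: "(r*x + y j)*p - (r*z + y j)*(p - Lp) = r*((x - z)*p) + (r*z + y j)*Lp"
    by (simp add: algebra_simps)
  have rp: "r*((x - z)*p) \<le> 4*\<bar>r\<bar>*\<theta>"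
  proof -
    have "\<bar>(x + s - z - s) * (2*(x + s - z)/\<epsilon>^2)\<bar> \<le> 4*\<theta>"
      using rp_bound[OF aq ss(1) ss(2) ep(1)] th by simp
    hence "\<bar>(x - z)*p\<bar> \<le> 4*\<theta>" unfolding p_def by simp
    hence "\<bar>r\<bar> * \<bar>(x - z)*p\<bar> \<le> \<bar>r\<bar> * (4*\<theta>)" by (simp add: mult_left_mono)
    moreover have "r*((x - z)*p) \<le> \<bar>r\<bar> * \<bar>(x - z)*p\<bar>" by (simp add: abs_mult[symmetric])
    ultimately show ?thesis by simp
  qed
  have bC: "(r*z + y j)*Lp \<le> \<beta>*(2*\<bar>r\<bar> + \<bar>r*xl\<bar> + \<bar>y 1\<bar> + \<bar>y 2\<bar>)"
  proof -
    have "(r*z + y j)*Lp \<le> \<beta>*(2*\<bar>r\<bar> + \<bar>r*xl\<bar> + \<bar>y j\<bar>)"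
      unfolding Lp_def using bC_bound[OF z, of \<beta> r "y j"] beta by simp
    also have "\<dots> \<le> \<beta>*(2*\<bar>r\<bar> + \<bar>r*xl\<bar> + \<bar>y 1\<bar> + \<bar>y 2\<bar>)"
      using j beta by (intro mult_left_mono) auto
    finally show ?thesis .
  qed
  have "\<rho>*(S - \<tau>) \<le> \<rho>*(u j x - v j z)"
  proof -
    have "S - \<tau> \<le> u j x - v j z" using GuvL Lnn[of z] by linarith
    then show ?thesis using rho by (simp add: mult_left_mono)
  qed
  also have "\<rho>*(u j x - v j z) = \<rho> * u j x - \<rho> * v j z" by (simp add: algebra_simps)
  finally have "\<rho>*(S - \<tau>) \<le> \<rho> * u j x - \<rho> * v j z" .
  then show False using I1 I2 pw cp alg rp bC key by linarith
qed


theorem mainTheorem2: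
  fixes \<rho> r \<gamma> xl :: real and y lam :: "nat \<Rightarrow> real" and u v :: "nat \<Rightarrow> real \<Rightarrow> real"
  assumes "\<rho> > 0" and "r < \<rho>" and "0 < y 1" and "y 1 < y 2" and "\<gamma> > 1"
    and "xl \<le> 0" and "\<rho> * xl + y 1 > 0" and "\<rho> * xl + y 2 > 0"
    and "lam 1 \<ge> 0" and "lam 2 \<ge> 0"
    and u_bdd: "\<exists>M. \<forall>j\<in>{1,2}. \<forall>x\<ge>xl. \<bar>u j x\<bar> \<le> M"
    and u_sub: "visc_sub \<rho> r \<gamma> y lam xl {xl..} u"
    and v_bdd: "\<exists>M. \<forall>j\<in>{1,2}. \<forall>x>xl. \<bar>v j x\<bar> \<le> M"
    and v_super: "visc_super \<rho> r \<gamma> y lam xl {xl<..} v"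
    and v_ext: "\<forall>j\<in>{1,2}. ereal (v j xl) = Liminf (at_right xl) (\<lambda>z. ereal (v j z))"
  shows "\<forall>j\<in>{1,2}. \<forall>x\<ge>xl. u j x \<le> v j x"
proof (rule ccontr)
  note rho = \<open>\<rho> > 0\<close> and gam = \<open>\<gamma> > 1\<close> and lam = \<open>lam 1 \<ge> 0\<close> \<open>lam 2 \<ge> 0\<close>
  assume "\<not> (\<forall>j\<in>{1,2}. \<forall>x\<ge>xl. u j x \<le> v j x)"
  then obtain j0 xh where j0: "j0 \<in> {1,2}" "xl \<le> xh" "v j0 xh < u j0 xh" by (meson not_le)
  define \<delta>0 where "\<delta>0 = u j0 xh - v j0 xh"
  have d0: "\<delta>0 > 0" using j0 \<delta>0_def by simp
  have usc: "\<forall>j\<in>{1,2}. usc_on {xl..} (u j)" using u_sub unfolding visc_sub_def by blast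
  have lsc: "\<forall>j\<in>{1,2}. lsc_on {xl..} (v j)"
  proof
    fix j :: nat assume j: "j \<in> {1,2}"
    have "lsc_on {xl<..} (v j)" using v_super j unfolding visc_super_def by blast
    then show "lsc_on {xl..} (v j)" using lsc_ext v_ext j by blast
  qed
  obtain Mu where Mu: "\<forall>j\<in>{1,2}. \<forall>x\<ge>xl. \<bar>u j x\<bar> \<le> Mu" using u_bdd by blast
  obtain Mv where Mv: "\<forall>j\<in>{1,2}. \<forall>x>xl. \<bar>v j x\<bar> \<le> Mv" using v_bdd by blast
  have Mv0: "Mv \<ge> 0" using Mv[rule_format, of 1 "xl + 1"] by simp
  define B where "B = Mu + Mv + \<bar>v 1 xl\<bar> + \<bar>v 2 xl\<bar>"
  have bnd: "\<forall>j\<in>{1,2}. \<forall>x\<ge>xl. \<forall>z\<ge>xl. u j x - v j z \<le> B"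
  proof (intro ballI allI impI)
    fix j :: nat and x z :: real assume j: "j \<in> {1,2}" and x: "xl \<le> x" and z: "xl \<le> z"
    have "\<bar>u j x\<bar> \<le> Mu" using Mu j x by blast
    hence "u j x \<le> Mu" by (simp add: abs_le_iff)
    moreover have "- v j z \<le> Mv + \<bar>v 1 xl\<bar> + \<bar>v 2 xl\<bar>"
    proof (cases "z = xl")
      case True
      have "- v j xl \<le> \<bar>v j xl\<bar>" by simp
      moreover have "\<bar>v j xl\<bar> \<le> \<bar>v 1 xl\<bar> + \<bar>v 2 xl\<bar>" using j by (cases "j = 1") auto
      ultimately have "- v j xl \<le> Mv + \<bar>v 1 xl\<bar> + \<bar>v 2 xl\<bar>" using Mv0 by linarith
      then show ?thesis using True by simp
    next
      case False
      hence "xl < z" using z by simp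
      hence "\<bar>v j z\<bar> \<le> Mv" using Mv j by blast
      hence "- v j z \<le> Mv" by (simp add: abs_le_iff)
      then show ?thesis using abs_ge_zero[of "v 1 xl"] abs_ge_zero[of "v 2 xl"] by linarith
    qed
    ultimately show "u j x - v j z \<le> B" unfolding B_def by linarith
  qed
  define C where "C = 2*\<bar>r\<bar> + \<bar>r*xl\<bar> + \<bar>y 1\<bar> + \<bar>y 2\<bar>"
  have C0: "C \<ge> 0" unfolding C_def by simp
  define lnh where "lnh = ln (1 + (xh - xl)^2)"
  have lnh0: "lnh \<ge> 0" unfolding lnh_def by simp
  define \<beta> where "\<beta> = min (\<delta>0/(2*(lnh + 1))) (\<rho>*\<delta>0/(8*(C+1)))"
  have beta: "\<beta> > 0" unfolding \<beta>_def using d0 lnh0 C0 rho by simp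
  have b1: "\<beta> * lnh \<le> \<delta>0/2"
  proof -
    have "\<beta> * lnh \<le> (\<delta>0/(2*(lnh + 1))) * lnh" unfolding \<beta>_def using lnh0 by (intro mult_right_mono) auto
    also have "\<dots> = (\<delta>0/2) * (lnh/(lnh+1))" using lnh0 by (simp add: field_simps)
    also have "\<dots> \<le> (\<delta>0/2) * 1" using lnh0 d0 by (intro mult_left_mono) auto
    finally show ?thesis by simp
  qed
  have b2: "\<beta> * C \<le> \<rho>*\<delta>0/8"
  proof -
    have "\<beta> * C \<le> (\<rho>*\<delta>0/(8*(C+1))) * C" unfolding \<beta>_def using C0 by (intro mult_right_mono) auto
    also have "\<dots> = (\<rho>*\<delta>0/8) * (C/(C+1))" using C0 by (simp add: field_simps)
    also have "\<dots> \<le> (\<rho>*\<delta>0/8) * 1" using C0 d0 rho by (intro mult_left_mono) auto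
    finally show ?thesis by simp
  qed
  define L where "L = (\<lambda>z. \<beta> * ln (1 + (z - xl)^2))"
  have Lnn: "0 \<le> L z" for z unfolding L_def using beta by simp
  have Lxl: "L xl = 0" unfolding L_def by simp
  have Lxh: "L xh \<le> \<delta>0/2" using b1 unfolding L_def lnh_def by simp
  have nz: "1 + (t - xl)^2 \<noteq> 0" for t :: real
  proof -
    have "0 < 1 + (t - xl)^2" by (simp add: add_pos_nonneg)
    then show ?thesis by simp
  qed
  have Lcont: "continuous_on UNIV L" unfolding L_def
    by (intro continuous_intros) (use nz in auto)
  define A where "A = {u j x - v j x - L x | j x. j \<in> {1,2} \<and> xl \<le> x}"
  define S where "S = Sup A"
  have Ane: "A \<noteq> {}" unfolding A_def using j0 by blast
  have Abdd: "bdd_above A"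
  proof (rule bdd_aboveI)
    fix a assume "a \<in> A"
    then obtain j x where "a = u j x - v j x - L x" "j \<in> {1,2}" "xl \<le> x" unfolding A_def by blast
    moreover have "u j x - v j x \<le> B" using bnd \<open>j \<in> {1,2}\<close> \<open>xl \<le> x\<close> by blast
    ultimately show "a \<le> B" using Lnn[of x] by linarith
  qed
  have Sb: "u j x - v j x - L x \<le> S" if "j \<in> {1,2}" "xl \<le> x" for j x
    unfolding S_def using that Abdd by (intro cSup_upper) (auto simp: A_def)
  have SB: "S \<le> B"
    unfolding S_def using Ane
  proof (intro cSup_least)
    fix a assume "a \<in> A"
    then obtain j x where "a = u j x - v j x - L x" "j \<in> {1,2}" "xl \<le> x" unfolding A_def by blast
    moreover have "u j x - v j x \<le> B" using bnd \<open>j \<in> {1,2}\<close> \<open>xl \<le> x\<close> by blast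
    ultimately show "a \<le> B" using Lnn[of x] by linarith
  qed auto
  have Sd: "\<delta>0/2 \<le> S" using Sb[OF j0(1) j0(2)] Lxh \<delta>0_def by linarith
  define \<theta> where "\<theta> = min (1/2) (\<rho>*\<delta>0/(32*(\<bar>r\<bar>+1)))"
  have th: "0 < \<theta>" "\<theta> \<le> 1/2"
    unfolding \<theta>_def using rho d0 by (simp, simp only: min.cobounded1)
  have th2: "4*\<bar>r\<bar>*\<theta> \<le> \<rho>*\<delta>0/8"
  proof -
    have "4*\<bar>r\<bar>*\<theta> \<le> 4*\<bar>r\<bar>*(\<rho>*\<delta>0/(32*(\<bar>r\<bar>+1)))" unfolding \<theta>_def by (intro mult_left_mono) auto
    also have "\<dots> = (\<rho>*\<delta>0/8) * (\<bar>r\<bar>/(\<bar>r\<bar>+1))" by (simp add: field_simps)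
    also have "\<dots> \<le> (\<rho>*\<delta>0/8) * 1" using rho d0 by (intro mult_left_mono) auto
    finally show ?thesis by simp
  qed
  define \<tau>0 where "\<tau>0 = min (\<delta>0/8) (\<theta>^2/2)"
  have ta0: "0 < \<tau>0" "\<tau>0 \<le> \<theta>^2/2" "\<tau>0 \<le> \<delta>0/8" unfolding \<tau>0_def using d0 th by auto
  have "\<theta>^2 \<le> 1" using th by (intro power_le_one) auto
  hence th1: "\<theta>^2/2 \<le> 1" by simp
  have keyg: "4*\<bar>r\<bar>*\<theta> + \<beta>*(2*\<bar>r\<bar> + \<bar>r*xl\<bar> + \<bar>y 1\<bar> + \<bar>y 2\<bar>) < \<rho>*(S - \<tau>)" if "\<tau> \<le> \<tau>0" for \<tau>
  proof -
    have "3*\<delta>0/8 \<le> S - \<tau>" using Sd that ta0 by linarith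
    hence "\<rho>*(3*\<delta>0/8) \<le> \<rho>*(S - \<tau>)" using rho by (intro mult_left_mono) auto
    moreover have "\<rho>*(3*\<delta>0/8) = 3*(\<rho>*\<delta>0/8)" by simp
    moreover have "\<rho>*\<delta>0 > 0" using rho d0 by simp
    ultimately show ?thesis using th2 b2 unfolding C_def by linarith
  qed
  define R where "R = xl + exp ((B - S + 1)/\<beta>) + (B - S + 2)"
  have Rz: "\<forall>z\<ge>xl. L z \<le> B - S + 1 \<longrightarrow> z + (B - S + 2) \<le> R"
  proof (intro allI impI)
    fix z assume z: "xl \<le> z" and Lz: "L z \<le> B - S + 1"
    have "ln (1 + (z - xl)^2) \<le> (B - S + 1)/\<beta>" using Lz beta unfolding L_def by (simp add: le_divide_eq mult.commute)
    hence "exp (ln (1 + (z - xl)^2)) \<le> exp ((B - S + 1)/\<beta>)" by simp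
    hence e1: "1 + (z - xl)^2 \<le> exp ((B - S + 1)/\<beta>)" by (simp add: add_pos_nonneg)
    have "z - xl \<le> 1 + (z - xl)^2"
    proof (cases "z - xl \<le> 1")
      case True then show ?thesis using zero_le_power2[of "z - xl"] by linarith
    next
      case False
      hence "(z - xl) * 1 \<le> (z - xl) * (z - xl)" by (intro mult_left_mono) auto
      then show ?thesis by (simp add: power2_eq_square)
    qed
    then show "z + (B - S + 2) \<le> R" using e1 unfolding R_def by linarith
  qed
  have ucR: "\<exists>\<delta>>0. \<forall>x z. xl \<le> x \<longrightarrow> z \<in> {xl..R} \<longrightarrow> \<bar>x - z\<bar> < \<delta> \<longrightarrow> u j x - v j z - L z < S + \<theta>^2/2"
    if j: "j \<in> {1,2}" for j
  proof (rule uc_lemma)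
    show "usc_on {xl..} (u j)" using usc j by blast
    show "lsc_on {xl..} (v j)" using lsc j by blast
    show "continuous_on UNIV L" by fact
    show "compact {xl..R}" by simp
    show "{xl..R} \<subseteq> {xl..}" by auto
    show "\<forall>a\<in>{xl..R}. u j a - v j a - L a < S + \<theta>^2/2"
    proof
      fix a assume "a \<in> {xl..R}"
      hence "u j a - v j a - L a \<le> S" using Sb j by simp
      moreover have "\<theta>^2 > 0" using th by simp
      ultimately show "u j a - v j a - L a < S + \<theta>^2/2" by linarith
    qed
  qed
  obtain e1 where e1: "e1 > 0" "\<forall>x z. xl \<le> x \<longrightarrow> z \<in> {xl..R} \<longrightarrow> \<bar>x - z\<bar> < e1 \<longrightarrow> u 1 x - v 1 z - L z < S + \<theta>^2/2"
    using ucR[of 1] by auto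
  obtain e2 where e2: "e2 > 0" "\<forall>x z. xl \<le> x \<longrightarrow> z \<in> {xl..R} \<longrightarrow> \<bar>x - z\<bar> < e2 \<longrightarrow> u 2 x - v 2 z - L z < S + \<theta>^2/2"
    using ucR[of 2] by auto
  define \<delta>1 where "\<delta>1 = min e1 e2"
  have dl1: "\<delta>1 > 0" using e1 e2 \<delta>1_def by simp
  have d1g: "\<forall>j\<in>{1,2}. \<forall>x z. xl \<le> x \<longrightarrow> xl \<le> z \<longrightarrow> z \<le> R \<longrightarrow> \<bar>x - z\<bar> < \<delta>' \<longrightarrow> u j x - v j z - L z < S + \<theta>^2/2"
    if "\<delta>' \<le> \<delta>1" for \<delta>'
    using e1 e2 that unfolding \<delta>1_def by auto
  have BS: "B - S + 4 > 0" using SB by simp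
  show False
  proof (cases "\<exists>j\<in>{1,2}. S \<le> u j xl - v j xl")
    case True
    then obtain jb where jb: "jb \<in> {1,2}" "S \<le> u jb xl - v jb xl" by blast
    define \<tau> where "\<tau> = \<tau>0"
    define \<epsilon>0 where "\<epsilon>0 = min 1 (min (\<delta>1/(B - S + 4)) (\<tau>/(2*\<beta>)))"
    have ep0: "\<epsilon>0 > 0" unfolding \<epsilon>0_def \<tau>_def using dl1 BS ta0 beta by simp
    obtain c where c: "xl < c" "c < xl + \<epsilon>0" "v jb c < v jb xl + \<tau>/2"
      using liminf_approx[of "v jb" xl \<epsilon>0 "\<tau>/2"] v_ext jb ep0 ta0 \<tau>_def by auto
    define \<epsilon> where "\<epsilon> = c - xl"
    have ep: "0 < \<epsilon>" "\<epsilon> \<le> 1" using c \<epsilon>_def \<epsilon>0_def by auto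
    have "\<epsilon> < \<delta>1/(B - S + 4)" using c \<epsilon>_def \<epsilon>0_def by auto
    hence "\<epsilon> * (B - S + 4) < \<delta>1" using BS by (simp add: less_divide_eq)
    hence ed: "(B - S + 3) * \<epsilon> < \<delta>1" using ep by (simp add: algebra_simps)
    have "\<epsilon> \<le> \<tau>/(2*\<beta>)" using c \<epsilon>_def \<epsilon>0_def by auto
    hence be: "\<beta> * \<epsilon> \<le> \<tau>/2" using beta by (simp add: le_divide_eq algebra_simps)
    have Lc: "L c \<le> \<tau>/2"
    proof -
      have "ln (1 + \<epsilon>^2) \<le> \<epsilon>^2" by (rule ln_add_one_self_le_self) simp
      also have "\<epsilon>^2 \<le> \<epsilon>" using ep by (simp add: power2_eq_square mult_left_le)
      finally have "\<beta> * ln (1 + \<epsilon>^2) \<le> \<beta> * \<epsilon>" using beta by (intro mult_left_mono) auto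
      then show ?thesis using be unfolding L_def \<epsilon>_def by simp
    qed
    show False
    proof (rule engine[OF rho gam lam u_sub v_super usc lsc bnd beta L_def SB th _ _ _ keyg ep _ _ Rz d1g ed])
      show "0 < \<tau>" "\<tau> \<le> \<theta>^2/2" "\<tau> \<le> 1" using ta0 th1 \<tau>_def by auto
      show "\<tau> \<le> \<tau>0" using \<tau>_def by simp
      show "0 \<le> \<epsilon>" "\<epsilon> \<le> \<epsilon>" using ep by auto
      show "\<delta>1 \<le> \<delta>1" by simp
      show "\<forall>j\<in>{1,2}. \<forall>x z. xl \<le> x \<longrightarrow> xl \<le> z \<longrightarrow> \<bar>x + \<epsilon> - z\<bar> \<le> \<epsilon>*\<theta> \<longrightarrow> \<bar>x - z\<bar> < \<delta>1 \<longrightarrow> S - \<tau> \<le> u j x - v j z - L z \<longrightarrow> xl < z"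
      proof (intro ballI allI impI)
        fix j x z assume h: "xl \<le> x" "\<bar>x + \<epsilon> - z\<bar> \<le> \<epsilon>*\<theta>"
        have "\<epsilon>*\<theta> \<le> \<epsilon>*(1/2)" using th ep by (intro mult_left_mono) auto
        moreover have "x + \<epsilon> - z \<le> \<epsilon>*\<theta>" using h(2) by (simp add: abs_le_iff)
        ultimately show "xl < z" using h(1) ep by linarith
      qed
      show "\<exists>j\<in>{1,2}. \<exists>x\<ge>xl. \<exists>z\<ge>xl. S - \<tau> \<le> u j x - v j z - (x + \<epsilon> - z)^2/\<epsilon>^2 - L z"
      proof -
        have "(xl + \<epsilon> - c)^2/\<epsilon>^2 = 0" unfolding \<epsilon>_def by simp
        hence "S - \<tau> \<le> u jb xl - v jb c - (xl + \<epsilon> - c)^2/\<epsilon>^2 - L c" using jb c Lc by linarith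
        moreover have "xl \<le> c" using c by simp
        ultimately have "\<exists>z\<ge>xl. S - \<tau> \<le> u jb xl - v jb z - (xl + \<epsilon> - z)^2/\<epsilon>^2 - L z" by blast
        hence "\<exists>x\<ge>xl. \<exists>z\<ge>xl. S - \<tau> \<le> u jb x - v jb z - (x + \<epsilon> - z)^2/\<epsilon>^2 - L z" by blast
        then show ?thesis using jb(1) by blast
      qed
    qed
  next
    case False
    hence lt: "u j xl - v j xl < S" if "j \<in> {1,2}" for j using False that not_le by blast
    define \<eta>0 where "\<eta>0 = (S - max (u 1 xl - v 1 xl) (u 2 xl - v 2 xl))/2"
    have eta0: "\<eta>0 > 0" unfolding \<eta>0_def using lt[of 1] lt[of 2] by simp
    have lt2: "u j xl - v j xl - L xl < S - \<eta>0" if "j \<in> {1,2}" for j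
    proof -
      have "2*\<eta>0 = S - max (u 1 xl - v 1 xl) (u 2 xl - v 2 xl)" unfolding \<eta>0_def by simp
      moreover have "u j xl - v j xl \<le> max (u 1 xl - v 1 xl) (u 2 xl - v 2 xl)" using that by auto
      ultimately show ?thesis using eta0 Lxl by linarith
    qed
    have uc0: "\<exists>\<delta>>0. \<forall>x z. xl \<le> x \<longrightarrow> z \<in> {xl} \<longrightarrow> \<bar>x - z\<bar> < \<delta> \<longrightarrow> u j x - v j z - L z < S - \<eta>0"
      if j: "j \<in> {1,2}" for j
    proof (rule uc_lemma)
      show "usc_on {xl..} (u j)" using usc j by blast
      show "lsc_on {xl..} (v j)" using lsc j by blast
      show "continuous_on UNIV L" by fact
      show "compact {xl}" by simp
      show "{xl} \<subseteq> {xl..}" by auto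
      show "\<forall>a\<in>{xl}. u j a - v j a - L a < S - \<eta>0" using lt2 j by simp
    qed
    obtain f1 where f1: "f1 > 0" "\<forall>x. xl \<le> x \<longrightarrow> \<bar>x - xl\<bar> < f1 \<longrightarrow> u 1 x - v 1 xl - L xl < S - \<eta>0"
      using uc0[of 1] by auto
    obtain f2 where f2: "f2 > 0" "\<forall>x. xl \<le> x \<longrightarrow> \<bar>x - xl\<bar> < f2 \<longrightarrow> u 2 x - v 2 xl - L xl < S - \<eta>0"
      using uc0[of 2] by auto
    define \<delta>2 where "\<delta>2 = min \<delta>1 (min f1 f2)"
    have dl2: "\<delta>2 > 0" "\<delta>2 \<le> \<delta>1" using dl1 f1 f2 \<delta>2_def by auto
    define \<tau> where "\<tau> = min \<tau>0 (\<eta>0/2)"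
    have ta: "0 < \<tau>" "\<tau> \<le> \<tau>0" "\<tau> < \<eta>0" unfolding \<tau>_def using ta0 eta0 by auto
    define \<epsilon> where "\<epsilon> = min 1 (\<delta>2/(B - S + 4))"
    have ep: "0 < \<epsilon>" "\<epsilon> \<le> 1" unfolding \<epsilon>_def using dl2 BS by auto
    have "\<epsilon> \<le> \<delta>2/(B - S + 4)" unfolding \<epsilon>_def by simp
    hence "\<epsilon> * (B - S + 4) \<le> \<delta>2" using BS by (simp add: le_divide_eq)
    hence ed: "(B - S + 3) * \<epsilon> < \<delta>2" using ep by (simp add: algebra_simps)
    obtain jn xn where jn: "jn \<in> {1,2}" "xl \<le> xn" "S - \<tau> < u jn xn - v jn xn - L xn"
    proof -
      have "S - \<tau> < S" using ta by simp
      then obtain a where "a \<in> A" "S - \<tau> < a" unfolding S_def using less_cSup_iff[OF Ane Abdd] by blast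
      then show ?thesis using that unfolding A_def by blast
    qed
    show False
    proof (rule engine[OF rho gam lam u_sub v_super usc lsc bnd beta L_def SB th _ _ _ keyg[OF ta(2)] ep _ _ Rz d1g[OF dl2(2)] ed])
      show "0 < \<tau>" "\<tau> \<le> \<theta>^2/2" "\<tau> \<le> 1" using ta ta0 th1 by auto
      show "0 \<le> (0::real)" "0 \<le> \<epsilon>" using ep by auto
      show "\<forall>j\<in>{1,2}. \<forall>x z. xl \<le> x \<longrightarrow> xl \<le> z \<longrightarrow> \<bar>x + 0 - z\<bar> \<le> \<epsilon>*\<theta> \<longrightarrow> \<bar>x - z\<bar> < \<delta>2 \<longrightarrow> S - \<tau> \<le> u j x - v j z - L z \<longrightarrow> xl < z"
      proof (intro ballI allI impI)
        fix j x z assume j: "j \<in> {1,2}" and h: "xl \<le> x" "xl \<le> z" "\<bar>x + 0 - z\<bar> \<le> \<epsilon>*\<theta>" "\<bar>x - z\<bar> < \<delta>2"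
          "S - \<tau> \<le> u j x - v j z - L z"
        show "xl < z"
        proof (rule ccontr)
          assume "\<not> xl < z"
          hence zx: "z = xl" using h by simp
          have "\<bar>x - xl\<bar> < f1" "\<bar>x - xl\<bar> < f2" using h zx \<delta>2_def by auto
          hence "u j x - v j xl - L xl < S - \<eta>0" using f1 f2 j h by auto
          then show False using h zx ta by simp
        qed
      qed
      show "\<exists>j\<in>{1,2}. \<exists>x\<ge>xl. \<exists>z\<ge>xl. S - \<tau> \<le> u j x - v j z - (x + 0 - z)^2/\<epsilon>^2 - L z"
        using jn by (intro bexI[OF _ jn(1)] exI[of _ xn] conjI) auto
    qed
  qed
qed

end
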